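(* Let $x_0\in(0,1)$ and let $a,b$ satisfy one of the conditions (H2), (H3), (H4) of the context. Then there exists a constant $\overline C_{HP}>0$ such that \[\int_0^1\frac{u^2}{ab}\,dx\le\overline C_{HP}\int_0^1(u')^2dx\] for every $u\in\mathcal K_{a,b}:=\{u\in L^2_{\frac1a}(0,1)\cap H^1_0(0,1): u/\sqrt{ab}\in L^2(0,1)\}$.
   Context: $a,b:[0,1]\to\mathbb R$ with $a(x_0)=b(x_0)=0$, $a,b>0$ on $[0,1]\setminus\{x_0\}$. $L^2_{\frac1a}(0,1)=\{u\in L^2:\int u^2/a<\infty\}$. Degeneracy types: (WWD) $a,b\in W^{1,1}(0,1)$ and $K_1,K_2\in(0,1)$ with $(x-x_0)a'\le K_1a$, $(x-x_0)b'\le K_2b$ a.e.; (SSD) $a,b\in W^{1,\infty}(0,1)$ with the same inequalities and $K_1,K_2\in[1,2)$; (WSD) $a\in W^{1,1}$, $b\in W^{1,\infty}$, $K_1\in(0,1)$, $K_2\in[1,2)$; (SWD) $a\in W^{1,\infty}$, $b\in W^{1,1}$, $K_1\in[1,2)$, $K_2\in(0,1)$. (H2): (WWD) with $1\le K_1+K_2\le2$ and there exist $c_1,c_2>0$ with $|x-x_0|^{K_1}\ge c_1a(x)$, $|x-x_0|^{K_2}\ge c_2b(x)$ for all $x\in[0,1]$; (H3): (WSD) or (SWD) with $K_1+K_2\le2$ and such $c_1,c_2$; (H4): (SSD) with $K_1=K_2=1$. *)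

theory Defs
  imports "HOL-Analysis.Analysis"
begin

text \<open>W^{1,1}(0,1): the (continuous representative of the) function a is absolutely
continuous on [0,1], with integrable weak derivative a'.\<close>
definition W11 :: "(real \<Rightarrow> real) \<Rightarrow> (real \<Rightarrow> real) \<Rightarrow> bool" where
  "W11 a a' \<longleftrightarrow> set_integrable lborel {0..1} a' \<and>
     (\<forall>x\<in>{0..1}. a x = a 0 + (LBINT t:{0..x}. a' t))"

definition W1inf :: "(real \<Rightarrow> real) \<Rightarrow> (real \<Rightarrow> real) \<Rightarrow> bool" where
  "W1inf a a' \<longleftrightarrow> W11 a a' \<and> (\<exists>M. AE x in lborel. x \<in> {0..1} \<longrightarrow> \<bar>a' x\<bar> \<le> M)"

definition weak_deg :: "(real \<Rightarrow> real) \<Rightarrow> real \<Rightarrow> real \<Rightarrow> bool" where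
  "weak_deg a x0 K \<longleftrightarrow> 0 < K \<and> K < 1 \<and>
     (\<exists>a'. W11 a a' \<and> (AE x in lborel. x \<in> {0..1} \<longrightarrow> (x - x0) * a' x \<le> K * a x))"

definition strong_deg :: "(real \<Rightarrow> real) \<Rightarrow> real \<Rightarrow> real \<Rightarrow> bool" where
  "strong_deg a x0 K \<longleftrightarrow> 1 \<le> K \<and> K < 2 \<and>
     (\<exists>a'. W1inf a a' \<and> (AE x in lborel. x \<in> {0..1} \<longrightarrow> (x - x0) * a' x \<le> K * a x))"

definition WWD where "WWD a b x0 K1 K2 \<longleftrightarrow> weak_deg a x0 K1 \<and> weak_deg b x0 K2"
definition SSD where "SSD a b x0 K1 K2 \<longleftrightarrow> strong_deg a x0 K1 \<and> strong_deg b x0 K2"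
definition WSD where "WSD a b x0 K1 K2 \<longleftrightarrow> weak_deg a x0 K1 \<and> strong_deg b x0 K2"
definition SWD where "SWD a b x0 K1 K2 \<longleftrightarrow> strong_deg a x0 K1 \<and> weak_deg b x0 K2"

definition power_bound :: "(real \<Rightarrow> real) \<Rightarrow> (real \<Rightarrow> real) \<Rightarrow> real \<Rightarrow> real \<Rightarrow> real \<Rightarrow> bool" where
  "power_bound a b x0 K1 K2 \<longleftrightarrow> (\<exists>c1 c2. c1 > 0 \<and> c2 > 0 \<and>
     (\<forall>x\<in>{0..1}. \<bar>x - x0\<bar> powr K1 \<ge> c1 * a x \<and> \<bar>x - x0\<bar> powr K2 \<ge> c2 * b x))"

definition H2 :: "(real \<Rightarrow> real) \<Rightarrow> (real \<Rightarrow> real) \<Rightarrow> real \<Rightarrow> bool" where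
  "H2 a b x0 \<longleftrightarrow> (\<exists>K1 K2. WWD a b x0 K1 K2 \<and> 1 \<le> K1 + K2 \<and> K1 + K2 \<le> 2 \<and>
     power_bound a b x0 K1 K2)"

definition H3 :: "(real \<Rightarrow> real) \<Rightarrow> (real \<Rightarrow> real) \<Rightarrow> real \<Rightarrow> bool" where
  "H3 a b x0 \<longleftrightarrow> (\<exists>K1 K2. (WSD a b x0 K1 K2 \<or> SWD a b x0 K1 K2) \<and> K1 + K2 \<le> 2 \<and>
     power_bound a b x0 K1 K2)"

definition H4 :: "(real \<Rightarrow> real) \<Rightarrow> (real \<Rightarrow> real) \<Rightarrow> real \<Rightarrow> bool" where
  "H4 a b x0 \<longleftrightarrow> SSD a b x0 1 1"

text \<open>H^1_0(0,1): u is the (continuous representative) primitive of an L^2 function u'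
with u(0) = u(1) = 0.\<close>
definition H10 :: "(real \<Rightarrow> real) \<Rightarrow> (real \<Rightarrow> real) \<Rightarrow> bool" where
  "H10 u u' \<longleftrightarrow> set_borel_measurable lborel {0..1} u' \<and>
     set_integrable lborel {0..1} (\<lambda>x. (u' x)\<^sup>2) \<and>
     (\<forall>x\<in>{0..1}. u x = (LBINT t:{0..x}. u' t)) \<and> u 1 = 0"

end

theory Submission
  imports Defs
begin


lemma nn_int_rsqrt:
  assumes "x > 0"
  shows "(\<integral>\<^sup>+s. ennreal (s powr (-1/2)) * indicator {0<..x} s \<partial>lborel) = ennreal (2 * sqrt x)"
proof -
  have "((\<lambda>s. s powr (-1/2)) has_integral ((\<lambda>s. 2 * sqrt s) x - (\<lambda>s. 2 * sqrt s) 0)) {0..x}"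
  proof (rule fundamental_theorem_of_calculus_interior[where f="\<lambda>s. 2 * sqrt s"])
    show "0 \<le> x" using assms by simp
    show "continuous_on {0..x} (\<lambda>s. 2 * sqrt s)"
      by (intro continuous_intros)
    fix s assume s: "s \<in> {0<..<x}"
    have "((\<lambda>s. 2 * sqrt s) has_real_derivative 2 * (inverse (sqrt s) / 2)) (at s)"
      using s by (intro DERIV_cmult DERIV_real_sqrt) auto
    moreover have "2 * (inverse (sqrt s) / 2) = s powr (-1/2)"
      using s by (simp add: powr_minus powr_half_sqrt[symmetric] divide_simps)
    ultimately show "((\<lambda>s. 2 * sqrt s) has_vector_derivative s powr (-1/2)) (at s)"
      by (simp add: has_real_derivative_iff_has_vector_derivative[symmetric])
  qed
  then have h0: "((\<lambda>s. s powr (-1/2)) has_integral (2 * sqrt x)) {0..x}" by simp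
  then have h: "((\<lambda>s. s powr (-1/2)) has_integral (2 * sqrt x)) {0<..x}"
    by (subst has_integral_spike_set_eq[where T="{0..x}"]) (auto intro: negligible_subset[of "{0}"])
  show ?thesis
    by (rule nn_integral_has_integral_lebesgue'[OF _ h]) auto
qed



lemma nn_int_pow32:
  assumes "s > 0"
  shows "(\<integral>\<^sup>+x. ennreal (2 * x powr (-3/2)) * indicator {s..L} x \<partial>lborel) \<le> ennreal (4 / sqrt s)"
proof (cases "s \<le> L")
  case False
  then have "{s..L} = {}" by auto
  then show ?thesis by simp
next
  case True
  have "((\<lambda>x. 2 * x powr (-3/2)) has_integral ((\<lambda>x. - 4 / sqrt x) L - (\<lambda>x. - 4 / sqrt x) s)) {s..L}"
  proof (rule fundamental_theorem_of_calculus[where f="\<lambda>x. - 4 / sqrt x"])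
    show "s \<le> L" using True .
    fix x assume x: "x \<in> {s..L}"
    then have xp: "x > 0" using assms by auto
    have "((\<lambda>x. - 4 / sqrt x) has_real_derivative (0 * sqrt x - (- 4) * (inverse (sqrt x) / 2)) / (sqrt x * sqrt x)) (at x)"
      using xp by (intro DERIV_divide DERIV_const DERIV_real_sqrt) auto
    then have "((\<lambda>x. - 4 / sqrt x) has_real_derivative - (- 4 * (inverse (sqrt x) / 2)) / (sqrt x * sqrt x)) (at x within {s..L})"
      by (simp add: has_field_derivative_at_within)
    moreover have "- (- 4 * (inverse (sqrt x) / 2)) / (sqrt x * sqrt x) = 2 * x powr (-3/2)"
    proof -
      have e: "x powr (3/2) = x * sqrt x"
        using powr_add[of x 1 "1/2"] xp by (simp add: powr_half_sqrt)
      have "x powr (-3/2) = inverse (x * sqrt x)"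
        using xp e by (simp add: powr_minus)
      then show ?thesis using xp by (simp add: divide_simps mult.commute)
    qed
    ultimately show "((\<lambda>x. - 4 / sqrt x) has_vector_derivative 2 * x powr (-3/2)) (at x within {s..L})"
      by (simp add: has_real_derivative_iff_has_vector_derivative[symmetric])
  qed
  then have h: "((\<lambda>x. 2 * x powr (-3/2)) has_integral (4 / sqrt s - 4 / sqrt L)) {s..L}" by simp
  have "(\<integral>\<^sup>+x. ennreal (2 * x powr (-3/2)) * indicator {s..L} x \<partial>lborel) = ennreal (4 / sqrt s - 4 / sqrt L)"
    by (rule nn_integral_has_integral_lebesgue'[OF _ h]) auto
  also have "\<dots> \<le> ennreal (4 / sqrt s)"
    using True assms by (intro ennreal_leI) auto
  finally show ?thesis .
qed

lemma pw2: "((s::real) powr a) ^ 2 = s powr (2*a)"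
  by (simp only: power2_eq_square powr_add[symmetric] mult_2)

lemma pw3: "(s::real) > 0 \<Longrightarrow> s powr a * s powr b = s powr (a+b)"
  by (simp add: powr_add)

lemma pw32: "(x::real)>0 \<Longrightarrow> 2 * sqrt x * (1 / x\<^sup>2) = 2 * x powr (-3/2)"
proof -
  assume x: "x > 0"
  have e: "x powr (3/2) = x * sqrt x"
    using powr_add[of x 1 "1/2"] x by (simp add: powr_half_sqrt)
  have s: "sqrt x * sqrt x = x" using x by simp
  have i: "x powr (-3/2) = inverse (x * sqrt x)" using e x by (simp add: powr_minus)
  have "2 * sqrt x * (1 / x\<^sup>2) = 2 * sqrt x / (x * (sqrt x * sqrt x))" using s by (simp add: power2_eq_square)
  also have "\<dots> = 2 / (x * sqrt x)" using x by (simp add: field_simps)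
  finally show ?thesis unfolding i by (simp add: divide_inverse)
qed



lemma hardy0:
  fixes v w :: "real \<Rightarrow> real" and L :: real
  assumes L: "L > 0" and vm[measurable]: "v \<in> borel_measurable borel"
    and hw: "\<And>x. 0 < x \<Longrightarrow> x \<le> L \<Longrightarrow> ennreal \<bar>w x\<bar> \<le> (\<integral>\<^sup>+s. ennreal \<bar>v s\<bar> * indicator {0<..x} s \<partial>lborel)"
  shows "(\<integral>\<^sup>+x. ennreal ((w x)\<^sup>2 / x\<^sup>2) * indicator {0<..L} x \<partial>lborel)
          \<le> 4 * (\<integral>\<^sup>+s. ennreal ((v s)\<^sup>2) * indicator {0<..L} s \<partial>lborel)"
proof -
  define A where "A x = (\<integral>\<^sup>+s. ennreal ((v s)\<^sup>2 * s powr (1/2)) * indicator {0<..x} s \<partial>lborel)" for x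
  have step1: "ennreal ((w x)\<^sup>2 / x\<^sup>2) \<le> ennreal (2 * x powr (-3/2)) * A x" if x: "0<x" "x \<le> L" for x
  proof -
    let ?f = "\<lambda>s. ennreal (\<bar>v s\<bar> * s powr (1/4)) * indicator {0<..x} s"
    let ?g = "\<lambda>s. ennreal (s powr (-1/4)) * indicator {0<..x} s"
    have fg: "(\<integral>\<^sup>+s. ennreal \<bar>v s\<bar> * indicator {0<..x} s \<partial>lborel) = (\<integral>\<^sup>+s. ?f s * ?g s \<partial>lborel)"
    proof (intro nn_integral_cong)
      fix s
      show "ennreal \<bar>v s\<bar> * indicator {0<..x} s = ?f s * ?g s"
      proof (cases "s \<in> {0<..x}")
        case True
        then have "\<bar>v s\<bar> * s powr (1/4) * s powr (-1/4) = \<bar>v s\<bar>"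
          by (simp add: mult.assoc pw3)
        then show ?thesis using True by (simp add: ennreal_mult'[symmetric])
      qed simp
    qed
    have cs: "(\<integral>\<^sup>+s. ?f s * ?g s \<partial>lborel)\<^sup>2 \<le> (\<integral>\<^sup>+s. (?f s)\<^sup>2 \<partial>lborel) * (\<integral>\<^sup>+s. (?g s)\<^sup>2 \<partial>lborel)"
      by (rule Cauchy_Schwarz_nn_integral) auto
    have f2: "(\<integral>\<^sup>+s. (?f s)\<^sup>2 \<partial>lborel) = A x"
      unfolding A_def
    proof (intro nn_integral_cong)
      fix s
      show "(?f s)\<^sup>2 = ennreal ((v s)\<^sup>2 * s powr (1/2)) * indicator {0<..x} s"
      proof (cases "s \<in> {0<..x}")
        case True
        then have "(\<bar>v s\<bar> * s powr (1/4))\<^sup>2 = (v s)\<^sup>2 * s powr (1/2)"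
          by (simp add: power_mult_distrib pw2)
        then show ?thesis using True by (simp add: ennreal_power)
      qed simp
    qed
    have g2: "(\<integral>\<^sup>+s. (?g s)\<^sup>2 \<partial>lborel) = ennreal (2 * sqrt x)"
    proof -
      have "(\<integral>\<^sup>+s. (?g s)\<^sup>2 \<partial>lborel) = (\<integral>\<^sup>+s. ennreal (s powr (-1/2)) * indicator {0<..x} s \<partial>lborel)"
      proof (intro nn_integral_cong)
        fix s
        show "(?g s)\<^sup>2 = ennreal (s powr (-1/2)) * indicator {0<..x} s"
        proof (cases "s \<in> {0<..x}")
          case True
          then have "(s powr (-1/4))\<^sup>2 = s powr (-1/2)"
            by (simp add: pw2)
          then show ?thesis using True by (simp add: ennreal_power)
        qed simp
      qed
      also have "\<dots> = ennreal (2 * sqrt x)" using nn_int_rsqrt x by simp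
      finally show ?thesis .
    qed
    have "ennreal ((w x)\<^sup>2) = (ennreal \<bar>w x\<bar>)\<^sup>2" by (simp add: ennreal_power)
    also have "\<dots> \<le> (\<integral>\<^sup>+s. ennreal \<bar>v s\<bar> * indicator {0<..x} s \<partial>lborel)\<^sup>2"
      using hw[OF x] by (intro power_mono) auto
    also have "\<dots> \<le> A x * ennreal (2 * sqrt x)"
      using cs fg f2 g2 by simp
    finally have w2: "ennreal ((w x)\<^sup>2) \<le> A x * ennreal (2 * sqrt x)" .
    have "ennreal ((w x)\<^sup>2 / x\<^sup>2) = ennreal ((w x)\<^sup>2) * ennreal (1 / x\<^sup>2)"
      by (simp add: ennreal_mult'[symmetric])
    also have "\<dots> \<le> A x * ennreal (2 * sqrt x) * ennreal (1 / x\<^sup>2)"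
      using w2 by (intro mult_right_mono) auto
    also have "\<dots> = A x * ennreal (2 * sqrt x * (1 / x\<^sup>2))"
      using x by (simp add: ennreal_mult'[symmetric] mult.assoc)
    also have "2 * sqrt x * (1 / x\<^sup>2) = 2 * x powr (-3/2)" using pw32 x by simp
    finally show ?thesis by (simp add: mult.commute)
  qed
  define F where "F x s = ennreal (2 * x powr (-3/2)) * indicator {0<..L} x * (ennreal ((v s)\<^sup>2 * s powr (1/2)) * indicator {0<..x} s)" for x s
  have Fm: "case_prod (\<lambda>s x. F x s) \<in> borel_measurable (lborel \<Otimes>\<^sub>M lborel)"
  proof -
    have "case_prod (\<lambda>s x. F x s) = (\<lambda>p. ennreal (2 * snd p powr (-3/2)) * indicator {0<..L} (snd p) * (ennreal ((v (fst p))\<^sup>2 * fst p powr (1/2)) * (if 0 < fst p \<and> fst p \<le> snd p then 1 else 0)))"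
      by (auto simp: F_def indicator_def fun_eq_iff)
    also have "\<dots> \<in> borel_measurable (lborel \<Otimes>\<^sub>M lborel)"
      by measurable
    finally show ?thesis .
  qed
  have "(\<integral>\<^sup>+x. ennreal ((w x)\<^sup>2 / x\<^sup>2) * indicator {0<..L} x \<partial>lborel)
      \<le> (\<integral>\<^sup>+x. ennreal (2 * x powr (-3/2)) * indicator {0<..L} x * A x \<partial>lborel)"
  proof (intro nn_integral_mono)
    fix x
    show "ennreal ((w x)\<^sup>2 / x\<^sup>2) * indicator {0<..L} x \<le> ennreal (2 * x powr (-3/2)) * indicator {0<..L} x * A x"
      using step1[of x] by (cases "x \<in> {0<..L}") (auto simp: mult.commute)
  qed
  also have "\<dots> = (\<integral>\<^sup>+x. \<integral>\<^sup>+s. F x s \<partial>lborel \<partial>lborel)"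
    unfolding A_def F_def by (intro nn_integral_cong nn_integral_cmult[symmetric]) measurable
  also have "\<dots> = (\<integral>\<^sup>+s. \<integral>\<^sup>+x. F x s \<partial>lborel \<partial>lborel)"
    by (rule lborel_pair.Fubini'[OF Fm])
  also have "\<dots> = (\<integral>\<^sup>+s. ennreal ((v s)\<^sup>2 * s powr (1/2)) * indicator {0<..L} s * (\<integral>\<^sup>+x. ennreal (2 * x powr (-3/2)) * indicator {s..L} x \<partial>lborel) \<partial>lborel)"
  proof (intro nn_integral_cong)
    fix s
    have "(\<integral>\<^sup>+x. F x s \<partial>lborel) = (\<integral>\<^sup>+x. ennreal ((v s)\<^sup>2 * s powr (1/2)) * indicator {0<..L} s * (ennreal (2 * x powr (-3/2)) * indicator {s..L} x) \<partial>lborel)"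
      by (intro nn_integral_cong) (auto simp: F_def indicator_def mult.commute)
    also have "\<dots> = ennreal ((v s)\<^sup>2 * s powr (1/2)) * indicator {0<..L} s * (\<integral>\<^sup>+x. ennreal (2 * x powr (-3/2)) * indicator {s..L} x \<partial>lborel)"
      by (rule nn_integral_cmult) measurable
    finally show "(\<integral>\<^sup>+x. F x s \<partial>lborel) = \<dots>" .
  qed
  also have "\<dots> \<le> (\<integral>\<^sup>+s. ennreal ((v s)\<^sup>2 * s powr (1/2)) * indicator {0<..L} s * ennreal (4 / sqrt s) \<partial>lborel)"
  proof (intro nn_integral_mono)
    fix s
    show "ennreal ((v s)\<^sup>2 * s powr (1/2)) * indicator {0<..L} s * (\<integral>\<^sup>+x. ennreal (2 * x powr (-3/2)) * indicator {s..L} x \<partial>lborel)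
       \<le> ennreal ((v s)\<^sup>2 * s powr (1/2)) * indicator {0<..L} s * ennreal (4 / sqrt s)"
      using nn_int_pow32[of s L] by (cases "s \<in> {0<..L}") (auto intro!: mult_left_mono)
  qed
  also have "\<dots> = (\<integral>\<^sup>+s. 4 * (ennreal ((v s)\<^sup>2) * indicator {0<..L} s) \<partial>lborel)"
  proof (intro nn_integral_cong)
    fix s
    show "ennreal ((v s)\<^sup>2 * s powr (1/2)) * indicator {0<..L} s * ennreal (4 / sqrt s) = 4 * (ennreal ((v s)\<^sup>2) * indicator {0<..L} s)"
    proof (cases "s \<in> {0<..L}")
      case True
      then have "(v s)\<^sup>2 * s powr (1/2) * (4 / sqrt s) = 4 * (v s)\<^sup>2"
        by (simp add: powr_half_sqrt)
      moreover have "ennreal (4 * (v s)\<^sup>2) = 4 * ennreal ((v s)\<^sup>2)"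
        by (simp add: ennreal_mult)
      ultimately show ?thesis using True
        by (simp add: ennreal_mult'[symmetric] mult_ac)
    qed simp
  qed
  also have "\<dots> = 4 * (\<integral>\<^sup>+s. ennreal ((v s)\<^sup>2) * indicator {0<..L} s \<partial>lborel)"
    by (rule nn_integral_cmult) measurable
  finally show ?thesis .
qed



lemma W11_facts:
  assumes "W11 a a'"
  shows "a' integrable_on {0..1}" "\<And>x. x \<in> {0..1} \<Longrightarrow> a x = a 0 + integral {0..x} a'"
    "continuous_on {0..1} a"
    "\<And>p q. 0 \<le> p \<Longrightarrow> p \<le> q \<Longrightarrow> q \<le> 1 \<Longrightarrow> a q - a p = integral {p..q} a'"
proof -
  have si: "set_integrable lborel {0..1} a'" using assms unfolding W11_def by auto
  show ai: "a' integrable_on {0..1}" using set_borel_integral_eq_integral(1)[OF si] .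
  show eq: "a x = a 0 + integral {0..x} a'" if "x \<in> {0..1}" for x
  proof -
    have "set_integrable lborel {0..x} a'"
      by (rule set_integrable_subset[OF si]) (use that in auto)
    then have "(LBINT t:{0..x}. a' t) = integral {0..x} a'"
      by (rule set_borel_integral_eq_integral(2))
    moreover have "a x = a 0 + (LBINT t:{0..x}. a' t)"
      using assms that unfolding W11_def by blast
    ultimately show ?thesis by simp
  qed
  have "continuous_on {0..1} (\<lambda>x. a 0 + integral {0..x} a')"
    by (intro continuous_on_add continuous_on_const indefinite_integral_continuous_1 ai)
  then show "continuous_on {0..1} a"
    by (rule continuous_on_eq) (rule eq[symmetric])
  show "a q - a p = integral {p..q} a'" if "0 \<le> p" "p \<le> q" "q \<le> 1" for p q
  proof -
    have "a' integrable_on {0..q}" by (rule integrable_on_subinterval[OF ai]) (use that in auto)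
    then have "integral {0..p} a' + integral {p..q} a' = integral {0..q} a'"
      using Henstock_Kurzweil_Integration.integral_combine[of 0 p q a'] that by simp
    moreover have "a p = a 0 + integral {0..p} a'" "a q = a 0 + integral {0..q} a'"
      by (rule eq, use that in auto)+
    ultimately show ?thesis by simp
  qed
qed

lemma gron_right:
  fixes \<phi> :: "real \<Rightarrow> real"
  assumes "x0 < p" "p \<le> q" "0 \<le> K"
    and cont: "continuous_on {p..q} \<phi>"
    and hyp: "\<And>t. t \<in> {p..q} \<Longrightarrow> \<phi> t \<le> \<phi> p + integral {p..t} (\<lambda>s. K * \<phi> s / (s - x0))"
  shows "\<phi> q \<le> \<phi> p * ((q - x0) / (p - x0)) powr K"
proof -
  define g where "g s = K * \<phi> s / (s - x0)" for s
  define R where "R t = integral {p..t} g" for t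
  define G where "G t = (\<phi> p + R t) * (t - x0) powr (-K)" for t
  have gc: "continuous_on {p..q} g"
    unfolding g_def using assms by (intro continuous_intros cont) auto
  have Rc: "continuous_on {p..q} R"
    unfolding R_def by (intro indefinite_integral_continuous_1 integrable_continuous_real gc)
  have Gc: "continuous_on {p..q} G"
    unfolding G_def using assms by (intro continuous_intros Rc) auto
  have "G q \<le> G p"
  proof (rule DERIV_nonpos_imp_decreasing_open[OF \<open>p \<le> q\<close> _ Gc])
    fix t assume t: "p < t" "t < q"
    have tx: "t - x0 > 0" using t assms by auto
    have dR: "(R has_real_derivative g t) (at t)"
      using integral_has_real_derivative[OF gc, of t] t unfolding R_def
      by (simp add: at_within_Icc_at)
    have dP: "((\<lambda>t. (t - x0) powr (-K)) has_real_derivative (-K) * (t - x0) powr (-K - 1)) (at t)"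
      using tx by (auto intro!: derivative_eq_intros)
    have dG0: "(G has_real_derivative ((0 + g t) * (t - x0) powr (-K) + ((-K) * (t - x0) powr (-K - 1)) * (\<phi> p + R t))) (at t)"
      unfolding G_def by (intro DERIV_mult DERIV_add DERIV_const dR dP)
    then have dG: "(G has_real_derivative (g t * (t - x0) powr (-K) + (\<phi> p + R t) * ((-K) * (t - x0) powr (-K - 1)))) (at t)"
      by (simp add: mult.commute)
    have pw: "(t - x0) powr (-K) = (t - x0) powr (-K - 1) * (t - x0)"
      using tx powr_add[of "t - x0" "-K-1" 1] by simp
    have "g t * (t - x0) powr (-K) + (\<phi> p + R t) * ((-K) * (t - x0) powr (-K - 1))
        = K * (t - x0) powr (-K - 1) * (\<phi> t - (\<phi> p + R t))"
      unfolding pw g_def using tx by (simp add: field_simps)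
    also have "\<dots> \<le> 0"
      using hyp[of t] t assms unfolding R_def g_def
      by (intro mult_nonneg_nonpos) auto
    finally show "\<exists>y. (G has_real_derivative y) (at t) \<and> y \<le> 0" using dG by blast
  qed
  have "\<phi> q \<le> \<phi> p + R q" using hyp[of q] assms unfolding R_def g_def by auto
  also have "\<dots> = G q * (q - x0) powr K"
  proof -
    have "(q - x0) powr (-K) * (q - x0) powr K = 1"
      using assms powr_add[of "q - x0" "-K" K] by simp
    then show ?thesis unfolding G_def by (simp add: mult.assoc)
  qed
  also have "\<dots> \<le> G p * (q - x0) powr K"
    using \<open>G q \<le> G p\<close> by (intro mult_right_mono) auto
  also have "\<dots> = \<phi> p * ((q - x0) / (p - x0)) powr K"
  proof -
    have Rp: "R p = 0" unfolding R_def by simp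
    have e1: "(p - x0) powr (-K) = 1 / (p - x0) powr K" unfolding powr_minus by (simp add: divide_inverse)
    have e2: "((q - x0) / (p - x0)) powr K = (q - x0) powr K / (p - x0) powr K"
      by (rule powr_divide)
    show ?thesis unfolding G_def Rp e1 e2 by simp
  qed
  finally show ?thesis .
qed



lemma gron_left:
  fixes \<phi> :: "real \<Rightarrow> real"
  assumes "q < x0" "p \<le> q" "0 \<le> K"
    and cont: "continuous_on {p..q} \<phi>"
    and hyp: "\<And>t. t \<in> {p..q} \<Longrightarrow> \<phi> t \<le> \<phi> q + integral {t..q} (\<lambda>s. K * \<phi> s / (x0 - s))"
  shows "\<phi> p \<le> \<phi> q * ((x0 - p) / (x0 - q)) powr K"
proof -
  let ?\<psi> = "\<lambda>t. \<phi> (- t)"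
  have c: "continuous_on {-q..-p} ?\<psi>"
  proof (rule continuous_on_compose2[OF cont])
    show "continuous_on {-q..-p} uminus" by (intro continuous_intros)
  qed auto
  have "?\<psi> (-p) \<le> ?\<psi> (-q) * ((-p - (-x0)) / (-q - (-x0))) powr K"
  proof (rule gron_right[OF _ _ _ c])
    fix t assume t: "t \<in> {-q..-p}"
    have e: "integral {-q..-(-t)} (\<lambda>s. (\<lambda>s. K * \<phi> s / (x0 - s)) (- s)) = integral {-t..q} (\<lambda>s. K * \<phi> s / (x0 - s))"
      by (rule Henstock_Kurzweil_Integration.integral_reflect_real)
    have "integral {-q..t} (\<lambda>s. K * ?\<psi> s / (s - - x0)) = integral {-t..q} (\<lambda>s. K * \<phi> s / (x0 - s))"
      using e by (simp add: add.commute)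
    then show "?\<psi> t \<le> ?\<psi> (-q) + integral {-q..t} (\<lambda>s. K * ?\<psi> s / (s - - x0))"
      using hyp[of "-t"] t by auto
  qed (use assms in auto)
  then show ?thesis by (simp add: add.commute)
qed

lemma lower_bound:
  assumes x0: "0 < x0" "x0 < 1" and K: "0 < K" and W: "W11 a a'"
    and ae: "AE x in lborel. x \<in> {0..1} \<longrightarrow> (x - x0) * a' x \<le> K * a x"
    and ax0: "a x0 = 0" and pos: "\<forall>x\<in>{0..1}. x \<noteq> x0 \<longrightarrow> a x > 0"
  shows "\<exists>c>0. \<forall>x\<in>{0..1}. c * \<bar>x - x0\<bar> powr K \<le> a x"
proof -
  note Wf = W11_facts[OF W]
  have acont: "continuous_on {p..q} a" if "0 \<le> p" "q \<le> 1" for p q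
    using Wf(3) by (rule continuous_on_subset) (use that in auto)
  have si: "set_integrable lborel {0..1} a'" using W unfolding W11_def by blast
  have sia: "set_integrable lborel {p..q} a'" if "0 \<le> p" "q \<le> 1" for p q
    by (rule set_integrable_subset[OF si]) (use that in auto)
  have right: "a 1 \<le> a x * ((1 - x0) / (x - x0)) powr K" if x: "x0 < x" "x \<le> 1" for x
  proof (rule gron_right[OF x(1) x(2) _ acont])
    fix t assume t: "t \<in> {x..1}"
    have "a t - a x = integral {x..t} a'" using Wf(4)[of x t] t x x0 by auto
    also have "\<dots> = (LBINT s:{x..t}. a' s)"
      using set_borel_integral_eq_integral(2)[OF sia] x x0 t by auto
    also have "\<dots> \<le> (LBINT s:{x..t}. K * a s / (s - x0))"
    proof (rule set_integral_mono_AE)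
      show "set_integrable lborel {x..t} a'" using sia x x0 t by auto
      have "continuous_on {x..t} (\<lambda>s. K * a s / (s - x0))"
        using x x0 t by (intro continuous_intros acont) auto
      then show "set_integrable lborel {x..t} (\<lambda>s. K * a s / (s - x0))"
        by (rule borel_integrable_atLeastAtMost')
      show "AE s\<in>{x..t} in lborel. a' s \<le> K * a s / (s - x0)"
        using ae
      proof (rule eventually_mono)
        fix s assume h: "s \<in> {0..1} \<longrightarrow> (s - x0) * a' s \<le> K * a s"
        show "s \<in> {x..t} \<longrightarrow> a' s \<le> K * a s / (s - x0)"
        proof
          assume s: "s \<in> {x..t}"
          then have "s - x0 > 0" "s \<in> {0..1}" using x x0 t by auto
          then show "a' s \<le> K * a s / (s - x0)" using h by (simp add: pos_le_divide_eq mult.commute)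
        qed
      qed
    qed
    also have "\<dots> = integral {x..t} (\<lambda>s. K * a s / (s - x0))"
    proof -
      have "continuous_on {x..t} (\<lambda>s. K * a s / (s - x0))"
        using x x0 t by (intro continuous_intros acont) auto
      then show ?thesis by (intro set_borel_integral_eq_integral(2) borel_integrable_atLeastAtMost')
    qed
    finally show "a t \<le> a x + integral {x..t} (\<lambda>s. K * a s / (s - x0))" by simp
  qed (use K x0 x in auto)
  have left: "a 0 \<le> a x * ((x0 - 0) / (x0 - x)) powr K" if x: "0 \<le> x" "x < x0" for x
  proof (rule gron_left[OF x(2) x(1) _ acont])
    fix t assume t: "t \<in> {0..x}"
    have "a t - a x = - integral {t..x} a'" using Wf(4)[of t x] t x x0 by auto
    also have "\<dots> = (LBINT s:{t..x}. - a' s)"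
    proof -
      have si': "set_integrable lborel {t..x} a'" using sia[of t x] x x0 t by auto
      have "(LBINT s:{t..x}. - a' s) = - (LBINT s:{t..x}. a' s)" by (rule set_integral_uminus[OF si'])
      then show ?thesis using set_borel_integral_eq_integral(2)[OF si'] by simp
    qed
    also have "\<dots> \<le> (LBINT s:{t..x}. K * a s / (x0 - s))"
    proof (rule set_integral_mono_AE)
      have si': "set_integrable lborel {t..x} a'" using sia[of t x] x x0 t by auto
      show "set_integrable lborel {t..x} (\<lambda>s. - a' s)"
        using integrable_minus[OF si'[unfolded set_integrable_def]] by (simp add: set_integrable_def)
      have "continuous_on {t..x} (\<lambda>s. K * a s / (x0 - s))"
        using x x0 t by (intro continuous_intros acont) auto
      then show "set_integrable lborel {t..x} (\<lambda>s. K * a s / (x0 - s))"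
        by (rule borel_integrable_atLeastAtMost')
      show "AE s\<in>{t..x} in lborel. - a' s \<le> K * a s / (x0 - s)"
        using ae
      proof (rule eventually_mono)
        fix s assume h: "s \<in> {0..1} \<longrightarrow> (s - x0) * a' s \<le> K * a s"
        show "s \<in> {t..x} \<longrightarrow> - a' s \<le> K * a s / (x0 - s)"
        proof
          assume s: "s \<in> {t..x}"
          then have "x0 - s > 0" "s \<in> {0..1}" using x x0 t by auto
          then show "- a' s \<le> K * a s / (x0 - s)" using h by (simp add: pos_le_divide_eq algebra_simps)
        qed
      qed
    qed
    also have "\<dots> = integral {t..x} (\<lambda>s. K * a s / (x0 - s))"
    proof -
      have "continuous_on {t..x} (\<lambda>s. K * a s / (x0 - s))"
        using x x0 t by (intro continuous_intros acont) auto
      then show ?thesis by (intro set_borel_integral_eq_integral(2) borel_integrable_atLeastAtMost')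
    qed
    finally show "a t \<le> a x + integral {t..x} (\<lambda>s. K * a s / (x0 - s))" by simp
  qed (use K x0 x in auto)
  have a1: "a 1 > 0" and a0: "a 0 > 0" using pos x0 by auto
  define c where "c = min (a 1 / (1 - x0) powr K) (a 0 / x0 powr K)"
  have cpos: "c > 0" unfolding c_def using a1 a0 x0 by auto
  show ?thesis
  proof (intro exI[of _ c] conjI cpos ballI)
    fix x :: real assume x: "x \<in> {0..1}"
    consider "x = x0" | "x0 < x" | "x < x0" by linarith
    then show "c * \<bar>x - x0\<bar> powr K \<le> a x"
    proof cases
      case 1 then show ?thesis using ax0 by simp
    next
      case 2
      have ax: "a x > 0" using pos x 2 by auto
      have "a 1 \<le> a x * ((1 - x0) powr K / (x - x0) powr K)"
        using right[of x] 2 x by (simp add: powr_divide)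
      then have "a 1 * (x - x0) powr K \<le> a x * (1 - x0) powr K"
        using 2 by (simp add: field_simps)
      then have "a 1 / (1 - x0) powr K * (x - x0) powr K \<le> a x"
        using x0 by (simp add: field_simps)
      moreover have "c * (x - x0) powr K \<le> a 1 / (1 - x0) powr K * (x - x0) powr K"
        unfolding c_def by (intro mult_right_mono) auto
      ultimately show ?thesis using 2 by simp
    next
      case 3
      have "a 0 \<le> a x * (x0 powr K / (x0 - x) powr K)"
        using left[of x] 3 x by (simp add: powr_divide)
      then have "a 0 * (x0 - x) powr K \<le> a x * x0 powr K"
        using 3 by (simp add: field_simps)
      then have "a 0 / x0 powr K * (x0 - x) powr K \<le> a x"
        using x0 by (simp add: field_simps)
      moreover have "c * (x0 - x) powr K \<le> a 0 / x0 powr K * (x0 - x) powr K"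
        unfolding c_def by (intro mult_right_mono) auto
      moreover have "\<bar>x - x0\<bar> = x0 - x" using 3 by simp
      ultimately show ?thesis by simp
    qed
  qed
qed



lemma deg_data:
  assumes "weak_deg a x0 K \<or> strong_deg a x0 K"
  shows "0 < K" "\<exists>a'. W11 a a' \<and> (AE x in lborel. x \<in> {0..1} \<longrightarrow> (x - x0) * a' x \<le> K * a x)"
  using assms unfolding weak_deg_def strong_deg_def W1inf_def by auto

lemma lip_bound:
  assumes W: "W1inf a a'"
  shows "\<exists>M\<ge>0. \<forall>p q. 0 \<le> p \<longrightarrow> p \<le> q \<longrightarrow> q \<le> 1 \<longrightarrow> \<bar>a q - a p\<bar> \<le> M * (q - p)"
proof -
  have W1: "W11 a a'" using W unfolding W1inf_def by auto
  obtain M0 where M0: "AE x in lborel. x \<in> {0..1} \<longrightarrow> \<bar>a' x\<bar> \<le> M0" using W unfolding W1inf_def by auto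
  define M where "M = max M0 0"
  have si: "set_integrable lborel {0..1} a'" using W1 unfolding W11_def by blast
  have "\<bar>a q - a p\<bar> \<le> M * (q - p)" if pq: "0 \<le> p" "p \<le> q" "q \<le> 1" for p q
  proof -
    have si': "set_integrable lborel {p..q} a'" by (rule set_integrable_subset[OF si]) (use pq in auto)
    have "a q - a p = integral {p..q} a'" using W11_facts(4)[OF W1 pq] .
    also have "\<dots> = (LBINT s:{p..q}. a' s)" using set_borel_integral_eq_integral(2)[OF si'] by simp
    finally have "\<bar>a q - a p\<bar> = norm (LBINT s:{p..q}. a' s)" by simp
    also have "\<dots> \<le> (LBINT s:{p..q}. norm (a' s))" by (rule set_integral_norm_bound[OF si'])
    also have "\<dots> \<le> (LBINT s:{p..q}. M)"
    proof (rule set_integral_mono_AE)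
      show "set_integrable lborel {p..q} (\<lambda>s. norm (a' s))"
        using set_integrable_abs[OF si'] by simp
      show "set_integrable lborel {p..q} (\<lambda>s. M)"
        by (rule borel_integrable_atLeastAtMost') (intro continuous_intros)
      show "AE s\<in>{p..q} in lborel. norm (a' s) \<le> M"
        using M0 by (rule eventually_mono) (use pq in \<open>auto simp: M_def\<close>)
    qed
    also have "\<dots> = M * (q - p)" using pq by (simp add: set_integral_const)
    finally show ?thesis .
  qed
  then show ?thesis using M_def by (intro exI[of _ M]) auto
qed



lemma hyp_common:
  assumes "H2 a b x0 \<or> H3 a b x0 \<or> H4 a b x0"
  shows "\<exists>K1 K2. (weak_deg a x0 K1 \<or> strong_deg a x0 K1) \<and> (weak_deg b x0 K2 \<or> strong_deg b x0 K2) \<and> K1 + K2 \<le> 2"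
  using assms unfolding H2_def H3_def H4_def WWD_def WSD_def SWD_def SSD_def by force

lemma ab_lower:
  assumes x0: "0 < x0" "x0 < 1"
    and "a x0 = 0" and "b x0 = 0"
    and pos: "\<forall>x\<in>{0..1}. x \<noteq> x0 \<longrightarrow> a x > 0 \<and> b x > 0"
    and H: "H2 a b x0 \<or> H3 a b x0 \<or> H4 a b x0"
  shows "\<exists>c>0. \<forall>x\<in>{0..1}. c * (x - x0)\<^sup>2 \<le> a x * b x"
proof -
  obtain K1 K2 where da: "weak_deg a x0 K1 \<or> strong_deg a x0 K1"
    and db: "weak_deg b x0 K2 \<or> strong_deg b x0 K2" and K: "K1 + K2 \<le> 2"
    using hyp_common[OF H] by blast
  obtain a' where a': "W11 a a'" "AE x in lborel. x \<in> {0..1} \<longrightarrow> (x - x0) * a' x \<le> K1 * a x"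
    using deg_data(2)[OF da] by blast
  obtain b' where b': "W11 b b'" "AE x in lborel. x \<in> {0..1} \<longrightarrow> (x - x0) * b' x \<le> K2 * b x"
    using deg_data(2)[OF db] by blast
  have K1: "0 < K1" using deg_data(1)[OF da] .
  have K2: "0 < K2" using deg_data(1)[OF db] .
  obtain c1 where c1: "c1 > 0" "\<forall>x\<in>{0..1}. c1 * \<bar>x - x0\<bar> powr K1 \<le> a x"
    using lower_bound[OF x0 K1 a'(1) a'(2)] assms pos by auto
  obtain c2 where c2: "c2 > 0" "\<forall>x\<in>{0..1}. c2 * \<bar>x - x0\<bar> powr K2 \<le> b x"
    using lower_bound[OF x0 K2 b'(1) b'(2)] assms pos by auto
  show ?thesis
  proof (intro exI[of _ "c1 * c2"] conjI ballI)
    show "c1 * c2 > 0" using c1 c2 by simp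
    fix x :: real assume x: "x \<in> {0..1}"
    let ?d = "\<bar>x - x0\<bar>"
    have d1: "?d \<le> 1" using x x0 by auto
    have "c1 * c2 * (x - x0)\<^sup>2 = c1 * c2 * ?d powr 2"
      by (cases "x = x0") (auto simp: powr_realpow)
    also have "\<dots> \<le> c1 * c2 * ?d powr (K1 + K2)"
      using K d1 c1 c2 by (intro mult_left_mono powr_mono') auto
    also have "\<dots> = (c1 * ?d powr K1) * (c2 * ?d powr K2)"
      by (simp add: powr_add)
    also have "\<dots> \<le> a x * b x"
    proof -
      have "0 \<le> c2 * ?d powr K2" using c2 by simp
      moreover have "0 \<le> a x" using pos x assms(3) by (cases "x = x0") (auto simp: less_imp_le)
      ultimately show ?thesis using c1 c2 x by (intro mult_mono) auto
    qed
    finally show "c1 * c2 * (x - x0)\<^sup>2 \<le> a x * b x" .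
  qed
qed

lemma ab_upper:
  assumes x0: "0 < x0" "x0 < 1"
    and ax0: "a x0 = 0" and bx0: "b x0 = 0"
    and pos: "\<forall>x\<in>{0..1}. x \<noteq> x0 \<longrightarrow> a x > 0 \<and> b x > 0"
    and H: "H2 a b x0 \<or> H3 a b x0 \<or> H4 a b x0"
  shows "\<exists>M>0. \<forall>x\<in>{0..1}. a x * b x \<le> M * \<bar>x - x0\<bar>"
proof -
  have pb: "\<exists>M>0. \<forall>x\<in>{0..1}. a x * b x \<le> M * \<bar>x - x0\<bar>"
    if pb: "power_bound a b x0 K1 K2" and K: "1 \<le> K1 + K2" for K1 K2
  proof -
    obtain c1 c2 where c: "c1 > 0" "c2 > 0"
      "\<forall>x\<in>{0..1}. \<bar>x - x0\<bar> powr K1 \<ge> c1 * a x \<and> \<bar>x - x0\<bar> powr K2 \<ge> c2 * b x"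
      using pb unfolding power_bound_def by blast
    show ?thesis
    proof (intro exI[of _ "1 / (c1 * c2)"] conjI ballI)
      show "1 / (c1 * c2) > 0" using c by simp
      fix x :: real assume x: "x \<in> {0..1}"
      let ?d = "\<bar>x - x0\<bar>"
      show "a x * b x \<le> 1 / (c1 * c2) * ?d"
      proof (cases "x = x0")
        case True then show ?thesis using ax0 by simp
      next
        case False
        have ab: "a x > 0" "b x > 0" using pos x False by auto
        have d1: "?d \<le> 1" using x x0 by auto
        have "(c1 * a x) * (c2 * b x) \<le> ?d powr K1 * ?d powr K2"
          using c x ab by (intro mult_mono) auto
        also have "\<dots> = ?d powr (K1 + K2)" by (simp add: powr_add)
        also have "\<dots> \<le> ?d powr 1" using K d1 by (intro powr_mono') auto
        finally have "c1 * c2 * (a x * b x) \<le> ?d" by (simp add: mult_ac)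
        then show ?thesis using c by (simp add: field_simps)
      qed
    qed
  qed
  consider "H2 a b x0" | "H3 a b x0" | "H4 a b x0" using H by blast
  then show ?thesis
  proof cases
    case 1
    then obtain K1 K2 where "power_bound a b x0 K1 K2" "1 \<le> K1 + K2" unfolding H2_def by blast
    then show ?thesis by (rule pb)
  next
    case 2
    then obtain K1 K2 where h: "WSD a b x0 K1 K2 \<or> SWD a b x0 K1 K2" "power_bound a b x0 K1 K2" unfolding H3_def by blast
    from h(1) have "1 \<le> K1 + K2" unfolding WSD_def SWD_def weak_deg_def strong_deg_def by auto
    then show ?thesis using pb h(2) by blast
  next
    case 3
    then have "strong_deg a x0 1" "strong_deg b x0 1" unfolding H4_def SSD_def by auto
    then obtain a' b' where "W1inf a a'" "W1inf b b'" unfolding strong_deg_def by blast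
    then obtain Ma Mb where Ma: "Ma \<ge> 0" "\<forall>p q. 0 \<le> p \<longrightarrow> p \<le> q \<longrightarrow> q \<le> 1 \<longrightarrow> \<bar>a q - a p\<bar> \<le> Ma * (q - p)"
      and Mb: "Mb \<ge> 0" "\<forall>p q. 0 \<le> p \<longrightarrow> p \<le> q \<longrightarrow> q \<le> 1 \<longrightarrow> \<bar>b q - b p\<bar> \<le> Mb * (q - p)"
      using lip_bound by metis
    have la: "\<bar>a x\<bar> \<le> Ma * \<bar>x - x0\<bar>" and lb: "\<bar>b x\<bar> \<le> Mb * \<bar>x - x0\<bar>" if x: "x \<in> {0..1}" for x
    proof -
      have "\<bar>a x - a x0\<bar> \<le> Ma * \<bar>x - x0\<bar> \<and> \<bar>b x - b x0\<bar> \<le> Mb * \<bar>x - x0\<bar>"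
      proof (cases "x0 \<le> x")
        case True then show ?thesis using Ma(2)[rule_format, of x0 x] Mb(2)[rule_format, of x0 x] x x0 by auto
      next
        case False then show ?thesis using Ma(2)[rule_format, of x x0] Mb(2)[rule_format, of x x0] x x0
          by (auto simp: abs_minus_commute)
      qed
      then show "\<bar>a x\<bar> \<le> Ma * \<bar>x - x0\<bar>" "\<bar>b x\<bar> \<le> Mb * \<bar>x - x0\<bar>" using ax0 bx0 by auto
    qed
    show ?thesis
    proof (intro exI[of _ "Ma * Mb + 1"] conjI ballI)
      show "Ma * Mb + 1 > 0" using Ma Mb by (simp add: add_nonneg_pos)
      fix x :: real assume x: "x \<in> {0..1}"
      have d1: "\<bar>x - x0\<bar> \<le> 1" using x x0 by auto
      have "a x * b x \<le> \<bar>a x\<bar> * \<bar>b x\<bar>" by (simp add: abs_mult[symmetric])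
      also have "\<dots> \<le> (Ma * \<bar>x - x0\<bar>) * (Mb * \<bar>x - x0\<bar>)"
        using la[OF x] lb[OF x] by (intro mult_mono) auto
      also have "\<dots> = (Ma * Mb) * \<bar>x - x0\<bar> * \<bar>x - x0\<bar>" by (simp add: mult_ac)
      also have "\<dots> \<le> (Ma * Mb) * \<bar>x - x0\<bar> * 1"
        using d1 Ma Mb by (intro mult_left_mono) auto
      also have "\<dots> \<le> (Ma * Mb + 1) * \<bar>x - x0\<bar>" by (simp add: algebra_simps)
      finally show "a x * b x \<le> (Ma * Mb + 1) * \<bar>x - x0\<bar>" .
    qed
  qed
qed



lemma set_nn:
  fixes f :: "real \<Rightarrow> real"
  assumes "set_integrable lborel A f" "\<And>x. x \<in> A \<Longrightarrow> 0 \<le> f x"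
  shows "(\<integral>\<^sup>+x. ennreal (f x) * indicator A x \<partial>lborel) = ennreal (LBINT x:A. f x)"
proof -
  have "(\<integral>\<^sup>+x. ennreal (f x) * indicator A x \<partial>lborel) = (\<integral>\<^sup>+x. ennreal (indicator A x *\<^sub>R f x) \<partial>lborel)"
    by (intro nn_integral_cong) (auto simp: indicator_def)
  also have "\<dots> = ennreal (LBINT x:A. f x)"
    unfolding set_lebesgue_integral_def
    using assms unfolding set_integrable_def
    by (intro nn_integral_eq_integral) (auto simp: indicator_def)
  finally show ?thesis .
qed

lemma abs_int_le_nn:
  fixes g :: "real \<Rightarrow> real"
  assumes si: "set_integrable lborel {p..q} g"
  shows "ennreal \<bar>integral {p..q} g\<bar> \<le> (\<integral>\<^sup>+r. ennreal \<bar>g r\<bar> * indicator {p..q} r \<partial>lborel)"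
proof -
  have "\<bar>integral {p..q} g\<bar> = norm (LBINT s:{p..q}. g s)"
    using set_borel_integral_eq_integral(2)[OF si] by simp
  also have "\<dots> \<le> (LBINT s:{p..q}. \<bar>g s\<bar>)"
    using set_integral_norm_bound[OF si] by simp
  finally have "ennreal \<bar>integral {p..q} g\<bar> \<le> ennreal (LBINT s:{p..q}. \<bar>g s\<bar>)"
    by (rule ennreal_leI)
  also have "\<dots> = (\<integral>\<^sup>+r. ennreal \<bar>g r\<bar> * indicator {p..q} r \<partial>lborel)"
    by (rule set_nn[symmetric]) (auto intro: set_integrable_abs[OF si])
  finally show ?thesis .
qed

lemma nn_Icc_Ioc:
  "(\<integral>\<^sup>+r. f r * indicator {p..q} r \<partial>lborel) = (\<integral>\<^sup>+r. f r * indicator {p<..q} (r::real) \<partial>lborel)"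
  by (intro nn_integral_cong_AE eventually_mono[OF AE_lborel_singleton[of p]]) (auto simp: indicator_def)

lemma nn_Icc_Ico:
  "(\<integral>\<^sup>+r. f r * indicator {p..q} r \<partial>lborel) = (\<integral>\<^sup>+r. f r * indicator {p..<q} (r::real) \<partial>lborel)"
  by (intro nn_integral_cong_AE eventually_mono[OF AE_lborel_singleton[of q]]) (auto simp: indicator_def)

lemma hardy_right:
  fixes U V :: "real \<Rightarrow> real"
  assumes x0: "x0 < 1" and [measurable]: "U \<in> borel_measurable borel" "V \<in> borel_measurable borel"
    and hyp: "\<And>y. y \<in> {x0<..1} \<Longrightarrow> ennreal \<bar>U y\<bar> \<le> (\<integral>\<^sup>+r. ennreal \<bar>V r\<bar> * indicator {x0<..y} r \<partial>lborel)"
  shows "(\<integral>\<^sup>+r. ennreal ((U r)\<^sup>2 / (r - x0)\<^sup>2) * indicator {x0<..1} r \<partial>lborel)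
      \<le> 4 * (\<integral>\<^sup>+r. ennreal ((V r)\<^sup>2) * indicator {x0<..1} r \<partial>lborel)"
proof -
  have h: "(\<integral>\<^sup>+x. ennreal ((U (x0 + x))\<^sup>2 / x\<^sup>2) * indicator {0<..1 - x0} x \<partial>lborel)
          \<le> 4 * (\<integral>\<^sup>+s. ennreal ((V (x0 + s))\<^sup>2) * indicator {0<..1 - x0} s \<partial>lborel)"
  proof (rule hardy0)
    show "0 < 1 - x0" using x0 by simp
    show "(\<lambda>s. V (x0 + s)) \<in> borel_measurable borel" by measurable
    fix x assume x: "0 < x" "x \<le> 1 - x0"
    have "ennreal \<bar>U (x0 + x)\<bar> \<le> (\<integral>\<^sup>+r. ennreal \<bar>V r\<bar> * indicator {x0<..x0 + x} r \<partial>lborel)"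
      using hyp[of "x0 + x"] x by auto
    also have "\<dots> = ennreal \<bar>1::real\<bar> * (\<integral>\<^sup>+s. ennreal \<bar>V (x0 + 1 * s)\<bar> * indicator {x0<..x0 + x} (x0 + 1 * s) \<partial>lborel)"
      by (rule nn_integral_real_affine) auto
    also have "\<dots> = (\<integral>\<^sup>+s. ennreal \<bar>V (x0 + s)\<bar> * indicator {0<..x} s \<partial>lborel)"
      by (auto intro!: nn_integral_cong simp: indicator_def)
    finally show "ennreal \<bar>U (x0 + x)\<bar> \<le> \<dots>" .
  qed
  have e1: "(\<integral>\<^sup>+r. ennreal ((U r)\<^sup>2 / (r - x0)\<^sup>2) * indicator {x0<..1} r \<partial>lborel)
     = (\<integral>\<^sup>+x. ennreal ((U (x0 + x))\<^sup>2 / x\<^sup>2) * indicator {0<..1 - x0} x \<partial>lborel)"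
  proof -
    have "(\<integral>\<^sup>+r. ennreal ((U r)\<^sup>2 / (r - x0)\<^sup>2) * indicator {x0<..1} r \<partial>lborel)
      = ennreal \<bar>1::real\<bar> * (\<integral>\<^sup>+x. ennreal ((U (x0 + 1 * x))\<^sup>2 / (x0 + 1 * x - x0)\<^sup>2) * indicator {x0<..1} (x0 + 1 * x) \<partial>lborel)"
      by (rule nn_integral_real_affine) auto
    also have "\<dots> = (\<integral>\<^sup>+x. ennreal ((U (x0 + x))\<^sup>2 / x\<^sup>2) * indicator {0<..1 - x0} x \<partial>lborel)"
      by (auto intro!: nn_integral_cong simp: indicator_def)
    finally show ?thesis .
  qed
  have e2: "(\<integral>\<^sup>+r. ennreal ((V r)\<^sup>2) * indicator {x0<..1} r \<partial>lborel)
     = (\<integral>\<^sup>+s. ennreal ((V (x0 + s))\<^sup>2) * indicator {0<..1 - x0} s \<partial>lborel)"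
  proof -
    have "(\<integral>\<^sup>+r. ennreal ((V r)\<^sup>2) * indicator {x0<..1} r \<partial>lborel)
      = ennreal \<bar>1::real\<bar> * (\<integral>\<^sup>+x. ennreal ((V (x0 + 1 * x))\<^sup>2) * indicator {x0<..1} (x0 + 1 * x) \<partial>lborel)"
      by (rule nn_integral_real_affine) auto
    also have "\<dots> = (\<integral>\<^sup>+s. ennreal ((V (x0 + s))\<^sup>2) * indicator {0<..1 - x0} s \<partial>lborel)"
      by (auto intro!: nn_integral_cong simp: indicator_def)
    finally show ?thesis .
  qed
  show ?thesis unfolding e1 e2 by (rule h)
qed

lemma hardy_left:
  fixes U V :: "real \<Rightarrow> real"
  assumes x0: "0 < x0" and [measurable]: "U \<in> borel_measurable borel" "V \<in> borel_measurable borel"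
    and hyp: "\<And>y. y \<in> {0..<x0} \<Longrightarrow> ennreal \<bar>U y\<bar> \<le> (\<integral>\<^sup>+r. ennreal \<bar>V r\<bar> * indicator {y..<x0} r \<partial>lborel)"
  shows "(\<integral>\<^sup>+r. ennreal ((U r)\<^sup>2 / (r - x0)\<^sup>2) * indicator {0..<x0} r \<partial>lborel)
      \<le> 4 * (\<integral>\<^sup>+r. ennreal ((V r)\<^sup>2) * indicator {0..<x0} r \<partial>lborel)"
proof -
  have h: "(\<integral>\<^sup>+x. ennreal ((U (x0 - x))\<^sup>2 / x\<^sup>2) * indicator {0<..x0} x \<partial>lborel)
          \<le> 4 * (\<integral>\<^sup>+s. ennreal ((V (x0 - s))\<^sup>2) * indicator {0<..x0} s \<partial>lborel)"
  proof (rule hardy0)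
    show "0 < x0" using x0 by simp
    show "(\<lambda>s. V (x0 - s)) \<in> borel_measurable borel" by measurable
    fix x assume x: "0 < x" "x \<le> x0"
    have "ennreal \<bar>U (x0 - x)\<bar> \<le> (\<integral>\<^sup>+r. ennreal \<bar>V r\<bar> * indicator {x0 - x..<x0} r \<partial>lborel)"
      using hyp[of "x0 - x"] x by auto
    also have "\<dots> = ennreal \<bar>-1::real\<bar> * (\<integral>\<^sup>+s. ennreal \<bar>V (x0 + -1 * s)\<bar> * indicator {x0 - x..<x0} (x0 + -1 * s) \<partial>lborel)"
      by (rule nn_integral_real_affine) auto
    also have "\<dots> = (\<integral>\<^sup>+s. ennreal \<bar>V (x0 - s)\<bar> * indicator {0<..x} s \<partial>lborel)"
      by (auto intro!: nn_integral_cong simp: indicator_def)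
    finally show "ennreal \<bar>U (x0 - x)\<bar> \<le> \<dots>" .
  qed
  have e1: "(\<integral>\<^sup>+r. ennreal ((U r)\<^sup>2 / (r - x0)\<^sup>2) * indicator {0..<x0} r \<partial>lborel)
     = (\<integral>\<^sup>+x. ennreal ((U (x0 - x))\<^sup>2 / x\<^sup>2) * indicator {0<..x0} x \<partial>lborel)"
  proof -
    have "(\<integral>\<^sup>+r. ennreal ((U r)\<^sup>2 / (r - x0)\<^sup>2) * indicator {0..<x0} r \<partial>lborel)
      = ennreal \<bar>-1::real\<bar> * (\<integral>\<^sup>+x. ennreal ((U (x0 + -1 * x))\<^sup>2 / (x0 + -1 * x - x0)\<^sup>2) * indicator {0..<x0} (x0 + -1 * x) \<partial>lborel)"
      by (rule nn_integral_real_affine) auto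
    also have "\<dots> = (\<integral>\<^sup>+x. ennreal ((U (x0 - x))\<^sup>2 / x\<^sup>2) * indicator {0<..x0} x \<partial>lborel)"
      by (auto intro!: nn_integral_cong simp: indicator_def)
    finally show ?thesis .
  qed
  have e2: "(\<integral>\<^sup>+r. ennreal ((V r)\<^sup>2) * indicator {0..<x0} r \<partial>lborel)
     = (\<integral>\<^sup>+s. ennreal ((V (x0 - s))\<^sup>2) * indicator {0<..x0} s \<partial>lborel)"
  proof -
    have "(\<integral>\<^sup>+r. ennreal ((V r)\<^sup>2) * indicator {0..<x0} r \<partial>lborel)
      = ennreal \<bar>-1::real\<bar> * (\<integral>\<^sup>+x. ennreal ((V (x0 + -1 * x))\<^sup>2) * indicator {0..<x0} (x0 + -1 * x) \<partial>lborel)"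
      by (rule nn_integral_real_affine) auto
    also have "\<dots> = (\<integral>\<^sup>+s. ennreal ((V (x0 - s))\<^sup>2) * indicator {0<..x0} s \<partial>lborel)"
      by (auto intro!: nn_integral_cong simp: indicator_def)
    finally show ?thesis .
  qed
  show ?thesis unfolding e1 e2 by (rule h)
qed



lemma nn_int_log:
  assumes "0 < e" "e \<le> d"
  shows "(\<integral>\<^sup>+x. ennreal (1 / (x - x0)) * indicator {x0 + e..x0 + d} x \<partial>lborel) = ennreal (ln d - ln e)"
proof -
  have "((\<lambda>x. 1 / (x - x0)) has_integral ((\<lambda>x. ln (x - x0)) (x0 + d) - (\<lambda>x. ln (x - x0)) (x0 + e))) {x0 + e..x0 + d}"
  proof (rule fundamental_theorem_of_calculus[where f="\<lambda>x. ln (x - x0)"])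
    show "x0 + e \<le> x0 + d" using assms by simp
    fix x assume x: "x \<in> {x0 + e..x0 + d}"
    then have xp: "x - x0 > 0" using assms by auto
    have "((\<lambda>x. ln (x - x0)) has_real_derivative (1 / (x - x0)) * (1 - 0)) (at x)"
      by (rule DERIV_chain2[where f=ln and g="\<lambda>x. x - x0"]) (use xp in \<open>auto intro!: DERIV_ln_divide derivative_eq_intros\<close>)
    then show "((\<lambda>x. ln (x - x0)) has_vector_derivative 1 / (x - x0)) (at x within {x0 + e..x0 + d})"
      by (simp add: has_real_derivative_iff_has_vector_derivative[symmetric] has_field_derivative_at_within)
  qed
  then have h: "((\<lambda>x. 1 / (x - x0)) has_integral (ln d - ln e)) {x0 + e..x0 + d}" by simp
  show ?thesis
    by (rule nn_integral_has_integral_lebesgue'[OF _ h]) (use assms in auto)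
qed

lemma u_zero:
  fixes u a b :: "real \<Rightarrow> real"
  assumes cont: "continuous_on {0..1} u" and x0: "0 < x0" "x0 < 1" and M: "M > 0"
    and ub: "\<forall>x\<in>{0..1}. a x * b x \<le> M * \<bar>x - x0\<bar>"
    and pos: "\<forall>x\<in>{0..1}. x \<noteq> x0 \<longrightarrow> a x * b x > 0"
    and fin: "(\<integral>\<^sup>+x. ennreal ((u x)\<^sup>2 / (a x * b x)) * indicator {0..1} x \<partial>lborel) = ennreal I"
    and I: "0 \<le> I"
  shows "u x0 = 0"
proof (rule ccontr)
  assume ne: "u x0 \<noteq> 0"
  define \<eta> where "\<eta> = (u x0)\<^sup>2 / 2"
  have eta: "\<eta> > 0" using ne unfolding \<eta>_def by simp
  have c2: "continuous_on {0..1} (\<lambda>x. (u x)\<^sup>2)" by (intro continuous_intros cont)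
  obtain d where d: "d > 0" "\<forall>x'\<in>{0..1}. dist x' x0 < d \<longrightarrow> dist ((u x')\<^sup>2) ((u x0)\<^sup>2) < \<eta>"
    using c2 unfolding continuous_on_iff using x0 eta by (metis atLeastAtMost_iff less_imp_le)
  define \<delta> where "\<delta> = min (d / 2) (1 - x0)"
  have del: "\<delta> > 0" "\<delta> \<le> 1 - x0" "\<delta> < d" using d x0 unfolding \<delta>_def by auto
  define e where "e = \<delta> * exp (- (I * M / \<eta>) - 1)"
  have h0: "0 \<le> I * M / \<eta>" using eta M I by simp
  have "- (I * M / \<eta>) - 1 \<le> 0" using h0 by linarith
  then have ex: "exp (- (I * M / \<eta>) - 1) \<le> 1" by simp
  have e: "0 < e" "e \<le> \<delta>" unfolding e_def
    using del mult_left_le[OF ex, of \<delta>] by auto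
  have lne: "ln \<delta> - ln e = I * M / \<eta> + 1"
    unfolding e_def using del by (simp add: ln_mult)
  have "ennreal (\<eta> / M) * ennreal (ln \<delta> - ln e)
      = ennreal (\<eta> / M) * (\<integral>\<^sup>+x. ennreal (1 / (x - x0)) * indicator {x0 + e..x0 + \<delta>} x \<partial>lborel)"
    using nn_int_log[OF e] by simp
  also have "\<dots> = (\<integral>\<^sup>+x. ennreal (\<eta> / M) * (ennreal (1 / (x - x0)) * indicator {x0 + e..x0 + \<delta>} x) \<partial>lborel)"
    by (rule nn_integral_cmult[symmetric]) measurable
  also have "\<dots> \<le> (\<integral>\<^sup>+x. ennreal ((u x)\<^sup>2 / (a x * b x)) * indicator {0..1} x \<partial>lborel)"
  proof (intro nn_integral_mono)
    fix x :: real
    show "ennreal (\<eta> / M) * (ennreal (1 / (x - x0)) * indicator {x0 + e..x0 + \<delta>} x) \<le> ennreal ((u x)\<^sup>2 / (a x * b x)) * indicator {0..1} x"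
    proof (cases "x \<in> {x0 + e..x0 + \<delta>}")
      case True
      then have x: "x \<in> {0..1}" "x \<noteq> x0" "x - x0 > 0" using e del x0 by auto
      have ab: "a x * b x > 0" using pos x by auto
      have ab2: "a x * b x \<le> M * (x - x0)" using bspec[OF ub x(1)] x(3) by simp
      have "dist x x0 < d" using True del e by (auto simp: dist_real_def)
      then have "dist ((u x)\<^sup>2) ((u x0)\<^sup>2) < \<eta>" using d x by auto
      then have hh: "\<bar>(u x)\<^sup>2 - (u x0)\<^sup>2\<bar> < \<eta>" by (simp add: dist_real_def)
      have ux: "(u x)\<^sup>2 \<ge> \<eta>" using hh unfolding abs_less_iff \<eta>_def by linarith
      have "\<eta> / M * (1 / (x - x0)) = \<eta> / (M * (x - x0))" by simp
      also have "\<dots> \<le> \<eta> / (a x * b x)"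
        using ab ab2 eta by (intro divide_left_mono) auto
      also have "\<dots> \<le> (u x)\<^sup>2 / (a x * b x)"
        using ab ux by (intro divide_right_mono) auto
      finally have "\<eta> / M * (1 / (x - x0)) \<le> (u x)\<^sup>2 / (a x * b x)" .
      then have "ennreal (\<eta> / M * (1 / (x - x0))) \<le> ennreal ((u x)\<^sup>2 / (a x * b x))"
        by (rule ennreal_leI)
      then show ?thesis using True x eta M
        by (simp add: ennreal_mult'[symmetric])
    qed simp
  qed
  also have "\<dots> = ennreal I" by (rule fin)
  finally have "ennreal (\<eta> / M * (ln \<delta> - ln e)) \<le> ennreal I"
    using eta M by (simp add: ennreal_mult'[symmetric])
  then have "\<eta> / M * (ln \<delta> - ln e) \<le> I" using I by simp
  moreover have "\<eta> / M * (ln \<delta> - ln e) = I + \<eta> / M"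
    unfolding lne using eta M by (simp add: field_simps)
  ultimately show False using eta M by (simp add: field_simps)
qed



lemma abs_le_1sq: "\<bar>t::real\<bar> \<le> 1 + t\<^sup>2"
proof (cases "\<bar>t\<bar> \<le> 1")
  case True then show ?thesis by (simp add: add_increasing2)
next
  case False
  then have "\<bar>t\<bar> * 1 \<le> \<bar>t\<bar> * \<bar>t\<bar>" by (intro mult_left_mono) auto
  then show ?thesis by (simp add: power2_eq_square abs_mult_self_eq)
qed

theorem lemma2p8:
  fixes a b :: "real \<Rightarrow> real" and x0 :: real
  assumes "0 < x0" and "x0 < 1"
    and "a x0 = 0" and "b x0 = 0"
    and "\<forall>x\<in>{0..1}. x \<noteq> x0 \<longrightarrow> a x > 0 \<and> b x > 0"
    and "H2 a b x0 \<or> H3 a b x0 \<or> H4 a b x0"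
  shows "\<exists>C>0. \<forall>u u'. H10 u u'
           \<and> set_integrable lborel {0..1} (\<lambda>x. (u x)\<^sup>2 / a x)
           \<and> set_integrable lborel {0..1} (\<lambda>x. (u x)\<^sup>2 / (a x * b x))
           \<longrightarrow> (LBINT x:{0..1}. (u x)\<^sup>2 / (a x * b x)) \<le> C * (LBINT x:{0..1}. (u' x)\<^sup>2)"
proof -
  note x0 = assms(1,2)
  obtain c where c: "c > 0" "\<forall>x\<in>{0..1}. c * (x - x0)\<^sup>2 \<le> a x * b x"
    using ab_lower[OF assms] by blast
  obtain M where M: "M > 0" "\<forall>x\<in>{0..1}. a x * b x \<le> M * \<bar>x - x0\<bar>"
    using ab_upper[OF assms] by blast
  have abpos: "\<forall>x\<in>{0..1}. x \<noteq> x0 \<longrightarrow> a x * b x > 0" using assms(5) by auto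
  have abnn: "0 \<le> a x * b x" if "x \<in> {0..1}" for x
    using c that by (meson order_trans mult_nonneg_nonneg less_imp_le zero_le_power2)
  show ?thesis
  proof (intro exI[of _ "4 / c"] conjI allI impI)
    show "4 / c > 0" using c by simp
    fix u u' :: "real \<Rightarrow> real"
    assume H: "H10 u u' \<and> set_integrable lborel {0..1} (\<lambda>x. (u x)\<^sup>2 / a x)
           \<and> set_integrable lborel {0..1} (\<lambda>x. (u x)\<^sup>2 / (a x * b x))"
    have um: "set_borel_measurable lborel {0..1} u'" and sq: "set_integrable lborel {0..1} (\<lambda>x. (u' x)\<^sup>2)"
      and ueq: "\<forall>x\<in>{0..1}. u x = (LBINT t:{0..x}. u' t)"
      using H unfolding H10_def by auto
    have iq: "set_integrable lborel {0..1} (\<lambda>x. (u x)\<^sup>2 / (a x * b x))" using H by auto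
    have si: "set_integrable lborel {0..1} u'"
    proof (rule set_integrable_bound[OF _ um])
      show "set_integrable lborel {0..1} (\<lambda>x. 1 + (u' x)\<^sup>2)"
      proof (rule set_integral_add(1)[OF _ sq])
        show "set_integrable lborel {0..1} (\<lambda>x::real. 1::real)"
          using borel_integrable_atLeastAtMost'[OF continuous_on_const, of 0 1 "1::real"] by simp
      qed
      show "AE x in lborel. x \<in> {0..1} \<longrightarrow> norm (u' x) \<le> norm (1 + (u' x)\<^sup>2)"
        using abs_le_1sq by (auto intro!: AE_I2)
    qed
    have u00: "u 0 = 0"
    proof -
      have "set_integrable lborel {0..0} u'" by (rule set_integrable_subset[OF si]) auto
      then have "(LBINT t:{0..0}. u' t) = integral {0..0} u'" by (rule set_borel_integral_eq_integral(2))
      then show ?thesis using ueq by simp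
    qed
    have W: "W11 u u'" unfolding W11_def using si ueq u00 by simp
    note Wf = W11_facts[OF W]
    define U where "U x = indicator {0..1} x * u x" for x
    define V where "V x = indicator {0..1} x * u' x" for x
    have Um: "U \<in> borel_measurable borel"
      using borel_measurable_continuous_on_indicator[OF _ Wf(3)] unfolding U_def by simp
    have Vm: "V \<in> borel_measurable borel"
      using um unfolding set_borel_measurable_def V_def by simp
    define Lq where "Lq = (LBINT x:{0..1}. (u x)\<^sup>2 / (a x * b x))"
    define Rq where "Rq = (LBINT x:{0..1}. (u' x)\<^sup>2)"
    have fin: "(\<integral>\<^sup>+x. ennreal ((u x)\<^sup>2 / (a x * b x)) * indicator {0..1} x \<partial>lborel) = ennreal Lq"
      unfolding Lq_def by (rule set_nn[OF iq]) (use abnn in auto)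
    have Lq0: "0 \<le> Lq" unfolding Lq_def set_lebesgue_integral_def using abnn
      by (intro integral_nonneg_AE AE_I2) (auto simp: indicator_def)
    have finR: "(\<integral>\<^sup>+x. ennreal ((u' x)\<^sup>2) * indicator {0..1} x \<partial>lborel) = ennreal Rq"
      unfolding Rq_def by (rule set_nn[OF sq]) auto
    have Rq0: "0 \<le> Rq" unfolding Rq_def set_lebesgue_integral_def
      by (intro integral_nonneg_AE AE_I2) (auto simp: indicator_def)
    have ux0: "u x0 = 0"
      by (rule u_zero[OF Wf(3) x0 M(1) M(2) abpos fin Lq0])
    have hypR: "ennreal \<bar>U y\<bar> \<le> (\<integral>\<^sup>+r. ennreal \<bar>V r\<bar> * indicator {x0<..y} r \<partial>lborel)"
      if y: "y \<in> {x0<..1}" for y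
    proof -
      have "U y = u y" using y x0 unfolding U_def by auto
      also have "u y = u y - u x0" using ux0 by simp
      also have "\<dots> = integral {x0..y} u'" using Wf(4)[of x0 y] y x0 by auto
      finally have e: "\<bar>U y\<bar> = \<bar>integral {x0..y} u'\<bar>" by simp
      have siy: "set_integrable lborel {x0..y} u'" by (rule set_integrable_subset[OF si]) (use y x0 in auto)
      have "ennreal \<bar>U y\<bar> \<le> (\<integral>\<^sup>+r. ennreal \<bar>u' r\<bar> * indicator {x0..y} r \<partial>lborel)"
        unfolding e by (rule abs_int_le_nn[OF siy])
      also have "\<dots> = (\<integral>\<^sup>+r. ennreal \<bar>V r\<bar> * indicator {x0..y} r \<partial>lborel)"
        by (intro nn_integral_cong) (use y x0 in \<open>auto simp: V_def indicator_def\<close>)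
      also have "\<dots> = (\<integral>\<^sup>+r. ennreal \<bar>V r\<bar> * indicator {x0<..y} r \<partial>lborel)"
        by (rule nn_Icc_Ioc)
      finally show ?thesis .
    qed
    have hypL: "ennreal \<bar>U y\<bar> \<le> (\<integral>\<^sup>+r. ennreal \<bar>V r\<bar> * indicator {y..<x0} r \<partial>lborel)"
      if y: "y \<in> {0..<x0}" for y
    proof -
      have "U y = u y" using y x0 unfolding U_def by auto
      also have "u y = - (u x0 - u y)" using ux0 by simp
      also have "\<dots> = - integral {y..x0} u'" using Wf(4)[of y x0] y x0 by auto
      finally have e: "\<bar>U y\<bar> = \<bar>integral {y..x0} u'\<bar>" by simp
      have siy: "set_integrable lborel {y..x0} u'" by (rule set_integrable_subset[OF si]) (use y x0 in auto)
      have "ennreal \<bar>U y\<bar> \<le> (\<integral>\<^sup>+r. ennreal \<bar>u' r\<bar> * indicator {y..x0} r \<partial>lborel)"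
        unfolding e by (rule abs_int_le_nn[OF siy])
      also have "\<dots> = (\<integral>\<^sup>+r. ennreal \<bar>V r\<bar> * indicator {y..x0} r \<partial>lborel)"
        by (intro nn_integral_cong) (use y x0 in \<open>auto simp: V_def indicator_def\<close>)
      also have "\<dots> = (\<integral>\<^sup>+r. ennreal \<bar>V r\<bar> * indicator {y..<x0} r \<partial>lborel)"
        by (rule nn_Icc_Ico)
      finally show ?thesis .
    qed
    have HR: "(\<integral>\<^sup>+r. ennreal ((U r)\<^sup>2 / (r - x0)\<^sup>2) * indicator {x0<..1} r \<partial>lborel)
      \<le> 4 * (\<integral>\<^sup>+r. ennreal ((V r)\<^sup>2) * indicator {x0<..1} r \<partial>lborel)"
      by (rule hardy_right[OF x0(2) Um Vm hypR])
    have HL: "(\<integral>\<^sup>+r. ennreal ((U r)\<^sup>2 / (r - x0)\<^sup>2) * indicator {0..<x0} r \<partial>lborel)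
      \<le> 4 * (\<integral>\<^sup>+r. ennreal ((V r)\<^sup>2) * indicator {0..<x0} r \<partial>lborel)"
      by (rule hardy_left[OF x0(1) Um Vm hypL])
    have pt: "(u x)\<^sup>2 / (a x * b x) \<le> 1 / c * ((U x)\<^sup>2 / (x - x0)\<^sup>2)" if x: "x \<in> {0..1}" "x \<noteq> x0" for x
    proof -
      have p: "0 < c * (x - x0)\<^sup>2" using c x by simp
      have "(u x)\<^sup>2 / (a x * b x) \<le> (u x)\<^sup>2 / (c * (x - x0)\<^sup>2)"
      proof (rule divide_left_mono)
        show "c * (x - x0)\<^sup>2 \<le> a x * b x" using c(2) x by auto
        show "0 < a x * b x * (c * (x - x0)\<^sup>2)" using abpos x p by simp
      qed simp
      also have "\<dots> = 1 / c * ((U x)\<^sup>2 / (x - x0)\<^sup>2)" using x unfolding U_def by simp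
      finally show ?thesis .
    qed
    let ?W = "\<lambda>x. ennreal ((U x)\<^sup>2 / (x - x0)\<^sup>2)"
    let ?Q = "\<lambda>x. ennreal ((V x)\<^sup>2)"
    have "ennreal Lq = (\<integral>\<^sup>+x. ennreal ((u x)\<^sup>2 / (a x * b x)) * indicator {0..1} x \<partial>lborel)"
      using fin by simp
    also have "\<dots> \<le> (\<integral>\<^sup>+x. ennreal (1 / c) * (?W x * indicator {0..<x0} x) + ennreal (1 / c) * (?W x * indicator {x0<..1} x) \<partial>lborel)"
    proof (intro nn_integral_mono)
      fix x :: real
      consider "x \<notin> {0..1}" | "x = x0" | "x \<in> {0..<x0}" | "x \<in> {x0<..1}" by force
      then show "ennreal ((u x)\<^sup>2 / (a x * b x)) * indicator {0..1} x
          \<le> ennreal (1 / c) * (?W x * indicator {0..<x0} x) + ennreal (1 / c) * (?W x * indicator {x0<..1} x)"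
      proof cases
        case 1 then show ?thesis by simp
      next
        case 2 then show ?thesis using assms(3) by simp
      next
        case 3
        then have "x \<in> {0..1}" "x \<noteq> x0" "x \<notin> {x0<..1}" using x0 by auto
        then show ?thesis using 3 pt[of x] c by (simp add: ennreal_mult'[symmetric] ennreal_leI)
      next
        case 4
        then have "x \<in> {0..1}" "x \<noteq> x0" "x \<notin> {0..<x0}" using x0 by auto
        then show ?thesis using 4 pt[of x] c by (simp add: ennreal_mult'[symmetric] ennreal_leI)
      qed
    qed
    also have "\<dots> = ennreal (1 / c) * (\<integral>\<^sup>+x. ?W x * indicator {0..<x0} x \<partial>lborel)
        + ennreal (1 / c) * (\<integral>\<^sup>+x. ?W x * indicator {x0<..1} x \<partial>lborel)"
      using Um by (simp add: nn_integral_add nn_integral_cmult)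
    also have "\<dots> \<le> ennreal (1 / c) * (4 * (\<integral>\<^sup>+r. ?Q r * indicator {0..<x0} r \<partial>lborel))
        + ennreal (1 / c) * (4 * (\<integral>\<^sup>+r. ?Q r * indicator {x0<..1} r \<partial>lborel))"
      using HL HR by (intro add_mono mult_left_mono) auto
    also have "\<dots> = ennreal (1 / c) * 4 * ((\<integral>\<^sup>+r. ?Q r * indicator {0..<x0} r \<partial>lborel) + (\<integral>\<^sup>+r. ?Q r * indicator {x0<..1} r \<partial>lborel))"
      by (simp add: distrib_left mult.assoc)
    also have "(\<integral>\<^sup>+r. ?Q r * indicator {0..<x0} r \<partial>lborel) + (\<integral>\<^sup>+r. ?Q r * indicator {x0<..1} r \<partial>lborel)
        = (\<integral>\<^sup>+r. ?Q r * indicator {0..<x0} r + ?Q r * indicator {x0<..1} r \<partial>lborel)"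
      using Vm by (simp add: nn_integral_add)
    also have "\<dots> \<le> (\<integral>\<^sup>+x. ennreal ((u' x)\<^sup>2) * indicator {0..1} x \<partial>lborel)"
    proof (intro nn_integral_mono)
      fix x :: real
      show "?Q x * indicator {0..<x0} x + ?Q x * indicator {x0<..1} x \<le> ennreal ((u' x)\<^sup>2) * indicator {0..1} x"
        using x0 by (cases "x \<in> {0..<x0}"; cases "x \<in> {x0<..1}") (auto simp: V_def indicator_def)
    qed
    also have "\<dots> = ennreal Rq" by (rule finR)
    finally have "ennreal Lq \<le> ennreal (1 / c) * 4 * ennreal Rq" by (simp add: mult_left_mono)
    also have "\<dots> = ennreal (4 / c * Rq)"
    proof -
      have e1: "ennreal (1 / c * 4 * Rq) = ennreal (1 / c * 4) * ennreal Rq"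
        using c Rq0 by (intro ennreal_mult) auto
      have e2: "ennreal (1 / c * 4) = ennreal (1 / c) * ennreal 4"
        using c by (intro ennreal_mult) auto
      have "ennreal (1 / c) * 4 * ennreal Rq = ennreal (1 / c) * ennreal 4 * ennreal Rq" by simp
      also have "\<dots> = ennreal (1 / c * 4 * Rq)" by (simp only: e1 e2)
      also have "ennreal (1 / c * 4 * Rq) = ennreal (4 / c * Rq)" by simp
      finally show ?thesis .
    qed
    finally have "Lq \<le> 4 / c * Rq" using c Rq0 by simp
    then show "(LBINT x:{0..1}. (u x)\<^sup>2 / (a x * b x)) \<le> 4 / c * (LBINT x:{0..1}. (u' x)\<^sup>2)"
      unfolding Lq_def Rq_def .
  qed
qed


end
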